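(* Let $T$ be a tree and let $F_1,F_2\in\mathcal S$ be substructures in $T$ sharing a common vertex $v$. Then $v\in X(F_1)$ if and only if $v\in X(F_2)$.
   Context: For a tree $T$, $S(T)$ is the tree obtained from $T$ by subdividing each edge exactly once. Let $\mathcal S=\{S(T): T \text{ a tree}\}$, and for $F=S(T)\in\mathcal S$ set $X(F)=V(T)$ (the non-subdivision vertices, called fixed-degree vertices); in particular $S(P_1)=P_1$ with $X(P_1)=V(P_1)$. A graph $F\in\mathcal S$ is a substructure in a graph $G$ if $F$ is a subgraph of $G$ and $\deg_G(v)=\deg_F(v)$ for every $v\in X(F)$. *)

theory Defs
  imports Main
begin

definition graph :: "'a set \<Rightarrow> 'a set set \<Rightarrow> bool" where
  "graph V E \<longleftrightarrow> finite V \<and> (\<forall>e\<in>E. \<exists>u w. u \<noteq> w \<and> e = {u, w} \<and> u \<in> V \<and> w \<in> V)"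

definition adj :: "'a set set \<Rightarrow> 'a \<Rightarrow> 'a \<Rightarrow> bool" where
  "adj E u w \<longleftrightarrow> u \<noteq> w \<and> {u, w} \<in> E"

definition connected_graph :: "'a set \<Rightarrow> 'a set set \<Rightarrow> bool" where
  "connected_graph V E \<longleftrightarrow> (\<forall>u\<in>V. \<forall>w\<in>V. (u, w) \<in> {(x, y). adj E x y}\<^sup>*)"

definition has_cycle :: "'a set \<Rightarrow> 'a set set \<Rightarrow> bool" where
  "has_cycle V E \<longleftrightarrow> (\<exists>cs. length cs \<ge> 3 \<and> distinct cs \<and> set cs \<subseteq> V \<and>
      (\<forall>i < length cs. adj E (cs ! i) (cs ! ((i + 1) mod length cs))))"

definition tree :: "'a set \<Rightarrow> 'a set set \<Rightarrow> bool" where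
  "tree V E \<longleftrightarrow> graph V E \<and> V \<noteq> {} \<and> connected_graph V E \<and> \<not> has_cycle V E"

definition degree :: "'a set set \<Rightarrow> 'a \<Rightarrow> nat" where
  "degree E v = card {e \<in> E. v \<in> e}"

definition subgraph :: "'a set \<Rightarrow> 'a set set \<Rightarrow> 'a set \<Rightarrow> 'a set set \<Rightarrow> bool" where
  "subgraph VF EF VG EG \<longleftrightarrow> graph VF EF \<and> VF \<subseteq> VG \<and> EF \<subseteq> EG"

text \<open>(VF, EF) is (a copy of) S(T) for a tree T with vertex set X = X(F): each edge e of T
  is replaced by a new subdivision vertex m e adjacent to both ends of e.\<close>

definition subdivided_tree :: "'a set \<Rightarrow> 'a set set \<Rightarrow> 'a set \<Rightarrow> bool" where
  "subdivided_tree VF EF X \<longleftrightarrow> (\<exists>ET m. tree X ET \<and> inj_on m ET \<and> m ` ET \<inter> X = {} \<and>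
      VF = X \<union> m ` ET \<and> EF = {{x, m e} | x e. e \<in> ET \<and> x \<in> e})"

definition substructure :: "'a set \<Rightarrow> 'a set set \<Rightarrow> 'a set \<Rightarrow> 'a set \<Rightarrow> 'a set set \<Rightarrow> bool" where
  "substructure VF EF X VG EG \<longleftrightarrow> subdivided_tree VF EF X \<and> subgraph VF EF VG EG \<and>
      (\<forall>v\<in>X. degree EG v = degree EF v)"

end

theory Submission
  imports Defs
begin

lemma adj_sym: "adj E u w \<Longrightarrow> adj E w u"
  unfolding adj_def by (auto simp: insert_commute)

lemma cycle_exists:
  assumes fin: "finite B" and ne: "B \<noteq> {}"
    and nb: "\<forall>u\<in>B. \<exists>w1 w2. w1 \<noteq> w2 \<and> w1 \<in> B \<and> w2 \<in> B \<and> adj E u w1 \<and> adj E u w2"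
  shows "\<exists>cs. length cs \<ge> 3 \<and> distinct cs \<and> set cs \<subseteq> B \<and>
      (\<forall>i < length cs. adj E (cs ! i) (cs ! ((i + 1) mod length cs)))"
proof -
  define P where "P xs \<longleftrightarrow> distinct xs \<and> set xs \<subseteq> B \<and> xs \<noteq> [] \<and>
     (\<forall>i. Suc i < length xs \<longrightarrow> adj E (xs!i) (xs!Suc i))" for xs
  obtain b where b: "b \<in> B" using ne by blast
  have Pb: "P [b]" using b by (simp add: P_def)
  have bound: "\<forall>y. P y \<longrightarrow> length y < card B + 1"
  proof (intro allI impI)
    fix y assume "P y"
    then have "distinct y" "set y \<subseteq> B" by (auto simp: P_def)
    then have "length y \<le> card B" using fin by (metis card_mono distinct_card)
    then show "length y < card B + 1" by simp
  qed
  obtain xs where Pxs: "P xs" and mx: "\<forall>y. P y \<longrightarrow> length y \<le> length xs"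
    using ex_has_greatest_nat[of P "[b]" length "card B + 1", OF Pb bound] by blast
  then obtain u rest where xs: "xs = u # rest" by (cases xs) (auto simp: P_def)
  have uB: "u \<in> B" using Pxs xs by (auto simp: P_def)
  obtain w1 w2 where w: "w1 \<noteq> w2" "w1 \<in> B" "w2 \<in> B" "adj E u w1" "adj E u w2"
    using nb uB by blast
  show ?thesis
  proof (cases rest)
    case Nil
    have "P [w1, u]" using w uB by (auto simp: P_def adj_def less_Suc_eq insert_commute)
    then have "2 \<le> length xs" using mx by fastforce
    then show ?thesis using Nil xs by simp
  next
    case (Cons y zs)
    obtain w where ww: "w \<in> B" "adj E u w" "w \<noteq> y" using w by metis
    have wu: "w \<noteq> u" using ww(2) by (auto simp: adj_def)
    show ?thesis
    proof (cases "w \<in> set xs")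
      case False
      have "P (w # xs)"
        unfolding P_def
      proof (intro conjI allI impI)
        show "distinct (w # xs)" using False Pxs by (simp add: P_def)
        show "set (w # xs) \<subseteq> B" using ww Pxs by (simp add: P_def)
        show "w # xs \<noteq> []" by simp
        fix i assume i: "Suc i < length (w # xs)"
        show "adj E ((w # xs) ! i) ((w # xs) ! Suc i)"
        proof (cases i)
          case 0 then show ?thesis using xs ww adj_sym by simp
        next
          case (Suc k) then show ?thesis using i Pxs by (simp add: P_def)
        qed
      qed
      then have "length (w # xs) \<le> length xs" using mx by blast
      then show ?thesis by simp
    next
      case True
      then obtain j where j: "j < length xs" "xs ! j = w" by (metis in_set_conv_nth)
      have j0: "j \<noteq> 0"
      proof
        assume "j = 0" then show False using j xs wu by simp
      qed
      have j1: "j \<noteq> 1"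
      proof
        assume "j = 1" then show False using j xs Cons ww(3) by simp
      qed
      define cs where "cs = take (Suc j) xs"
      have lcs: "length cs = Suc j" using j by (simp add: cs_def)
      show ?thesis
      proof (intro exI conjI allI impI)
        show "3 \<le> length cs" using lcs j0 j1 by simp
        show "distinct cs" using Pxs by (simp add: P_def cs_def)
        show "set cs \<subseteq> B" using Pxs set_take_subset[of "Suc j" xs] by (auto simp: P_def cs_def)
        fix i assume i: "i < length cs"
        show "adj E (cs ! i) (cs ! ((i + 1) mod length cs))"
        proof (cases "i = j")
          case True
          then have "(i + 1) mod length cs = 0" using lcs by simp
          moreover have "cs ! j = w" using j by (simp add: cs_def)
          moreover have "cs ! 0 = u" using xs by (simp add: cs_def)
          ultimately show ?thesis using True adj_sym[OF ww(2)] by simp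
        next
          case False
          then have "i < j" using i lcs by simp
          then have "(i + 1) mod length cs = Suc i" using lcs by simp
          then show ?thesis using \<open>i < j\<close> j Pxs by (simp add: cs_def P_def)
        qed
      qed
    qed
  qed
qed

lemma tree_finE:
  assumes "tree V E" shows "finite E"
proof -
  have g: "graph V E" using assms by (simp add: tree_def)
  have sub: "E \<subseteq> Pow V"
  proof
    fix e assume "e \<in> E"
    then obtain u w where "e = {u, w}" "u \<in> V" "w \<in> V" using g unfolding graph_def by meson
    then show "e \<in> Pow V" by simp
  qed
  have "finite V" using g by (simp add: graph_def)
  then have "finite (Pow V)" by simp
  then show ?thesis using sub by (rule finite_subset[rotated])
qed

lemma L1:
  assumes "substructure VF EF X V E" "finite E" "x \<in> X" "e \<in> E" "x \<in> e"
  shows "e \<in> EF"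
proof -
  have sub: "EF \<subseteq> E" using assms(1) by (simp add: substructure_def subgraph_def)
  have deg: "degree E x = degree EF x" using assms(1,3) by (simp add: substructure_def)
  have s1: "{e \<in> EF. x \<in> e} \<subseteq> {e \<in> E. x \<in> e}" using sub by auto
  have f1: "finite {e \<in> E. x \<in> e}" using assms(2) by simp
  have c1: "card {e \<in> EF. x \<in> e} = card {e \<in> E. x \<in> e}" using deg by (simp add: degree_def)
  have "{e \<in> EF. x \<in> e} = {e \<in> E. x \<in> e}" using card_subset_eq[OF f1 s1 c1] .
  then show ?thesis using assms(4,5) by blast
qed

lemma L2:
  assumes "substructure VF EF X V E" "x \<in> X" "{x, w} \<in> EF"
  shows "w \<notin> X \<and> w \<in> VF"
proof -
  have "subdivided_tree VF EF X" using assms(1) unfolding substructure_def by (elim conjE)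
  then obtain ET m where t0: "tree X ET" and i0: "inj_on m ET" and st: "m ` ET \<inter> X = {}" "VF = X \<union> m ` ET"
      "EF = {{x, m e} | x e. e \<in> ET \<and> x \<in> e}"
    unfolding subdivided_tree_def by (elim exE conjE)
  obtain y e where ye: "{x, w} = {y, m e}" "e \<in> ET" "y \<in> e" using assms(3) st(3) by blast
  have me: "m e \<notin> X" using st(1) ye(2) by blast
  have "w = m e" using ye(1) me assms(2) by (auto simp: doubleton_eq_iff)
  then show ?thesis using me st(2) ye(2) by blast
qed

lemma L3:
  assumes "substructure VF EF X V E" "u \<in> VF" "u \<notin> X"
  shows "\<exists>w1 w2. w1 \<noteq> w2 \<and> w1 \<in> X \<and> w2 \<in> X \<and> {u, w1} \<in> EF \<and> {u, w2} \<in> EF"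
proof -
  have "subdivided_tree VF EF X" using assms(1) unfolding substructure_def by (elim conjE)
  then obtain ET m where st: "tree X ET" "inj_on m ET" "m ` ET \<inter> X = {}" "VF = X \<union> m ` ET"
      "EF = {{x, m e} | x e. e \<in> ET \<and> x \<in> e}"
    unfolding subdivided_tree_def by (elim exE conjE)
  obtain e where e: "e \<in> ET" "u = m e" using assms(2,3) st(4) by blast
  have "graph X ET" using st(1) by (simp add: tree_def)
  then obtain a b where ab: "a \<noteq> b" "e = {a, b}" "a \<in> X" "b \<in> X"
    using e(1) unfolding graph_def by blast
  have "{a, u} \<in> EF" "{b, u} \<in> EF" using st(5) e ab by auto
  then have "{u, a} \<in> EF" "{u, b} \<in> EF" by (auto simp: insert_commute)
  then show ?thesis using ab by blast
qed

lemma bad_step: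
  assumes "substructure VF1 EF1 X1 V E" "substructure VF2 EF2 X2 V E" "finite E"
    and "u \<in> X1" "u \<in> VF2" "u \<notin> X2"
  shows "\<exists>w1 w2. w1 \<noteq> w2 \<and> w1 \<in> X2 \<and> w1 \<in> VF1 \<and> w1 \<notin> X1 \<and>
     w2 \<in> X2 \<and> w2 \<in> VF1 \<and> w2 \<notin> X1 \<and> adj E u w1 \<and> adj E u w2"
proof -
  obtain w1 w2 where w: "w1 \<noteq> w2" "w1 \<in> X2" "w2 \<in> X2" "{u, w1} \<in> EF2" "{u, w2} \<in> EF2"
    using L3[OF assms(2,5,6)] by blast
  have sub: "EF2 \<subseteq> E" using assms(2) by (simp add: substructure_def subgraph_def)
  have e1: "{u, w1} \<in> E" "{u, w2} \<in> E" using w sub by auto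
  have f1: "{u, w1} \<in> EF1" "{u, w2} \<in> EF1"
    using L1[OF assms(1,3,4)] e1 by auto
  have "w1 \<notin> X1 \<and> w1 \<in> VF1" "w2 \<notin> X1 \<and> w2 \<in> VF1" using L2[OF assms(1,4)] f1 by auto
  moreover have "u \<noteq> w1" "u \<noteq> w2" using w assms(6) by auto
  ultimately show ?thesis using w e1 by (auto simp: adj_def)
qed

lemma XsubVF:
  assumes "substructure VF EF X V E" shows "X \<subseteq> VF"
proof -
  have "subdivided_tree VF EF X" using assms(1) unfolding substructure_def by (elim conjE)
  then show ?thesis
    unfolding subdivided_tree_def by (elim exE conjE) simp
qed

theorem proposition4p4:
  fixes V :: "'a set" and E :: "'a set set"
  assumes "tree V E"
    and "substructure VF1 EF1 X1 V E"
    and "substructure VF2 EF2 X2 V E"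
    and "v \<in> VF1" and "v \<in> VF2"
  shows "v \<in> X1 \<longleftrightarrow> v \<in> X2"
proof (rule ccontr)
  assume nv: "\<not> (v \<in> X1 \<longleftrightarrow> v \<in> X2)"
  have fE: "finite E" using tree_finE[OF assms(1)] .
  define B where "B = {u. u \<in> X1 \<and> u \<in> VF2 \<and> u \<notin> X2} \<union> {u. u \<in> X2 \<and> u \<in> VF1 \<and> u \<notin> X1}"
  have "VF1 \<subseteq> V" "VF2 \<subseteq> V" using assms(2,3) by (auto simp: substructure_def subgraph_def)
  moreover have "X1 \<subseteq> VF1" "X2 \<subseteq> VF2" using XsubVF[OF assms(2)] XsubVF[OF assms(3)] by auto
  ultimately have BV: "B \<subseteq> V" unfolding B_def by blast
  have fV: "finite V" using assms(1) by (simp add: tree_def graph_def)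
  have fB: "finite B" using BV fV finite_subset by blast
  have neB: "B \<noteq> {}" using nv assms(4,5) unfolding B_def by blast
  have nb: "\<forall>u\<in>B. \<exists>w1 w2. w1 \<noteq> w2 \<and> w1 \<in> B \<and> w2 \<in> B \<and> adj E u w1 \<and> adj E u w2"
  proof
    fix u assume "u \<in> B"
    then consider "u \<in> X1" "u \<in> VF2" "u \<notin> X2" | "u \<in> X2" "u \<in> VF1" "u \<notin> X1"
      unfolding B_def by blast
    then show "\<exists>w1 w2. w1 \<noteq> w2 \<and> w1 \<in> B \<and> w2 \<in> B \<and> adj E u w1 \<and> adj E u w2"
    proof cases
      case 1
      then obtain w1 w2 where "w1 \<noteq> w2 \<and> w1 \<in> X2 \<and> w1 \<in> VF1 \<and> w1 \<notin> X1 \<and>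
     w2 \<in> X2 \<and> w2 \<in> VF1 \<and> w2 \<notin> X1 \<and> adj E u w1 \<and> adj E u w2"
        using bad_step[OF assms(2,3) fE] by blast
      then have "w1 \<noteq> w2 \<and> w1 \<in> B \<and> w2 \<in> B \<and> adj E u w1 \<and> adj E u w2" unfolding B_def by simp
      then show ?thesis by blast
    next
      case 2
      then obtain w1 w2 where "w1 \<noteq> w2 \<and> w1 \<in> X1 \<and> w1 \<in> VF2 \<and> w1 \<notin> X2 \<and>
     w2 \<in> X1 \<and> w2 \<in> VF2 \<and> w2 \<notin> X2 \<and> adj E u w1 \<and> adj E u w2"
        using bad_step[OF assms(3,2) fE] by blast
      then have "w1 \<noteq> w2 \<and> w1 \<in> B \<and> w2 \<in> B \<and> adj E u w1 \<and> adj E u w2" unfolding B_def by simp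
      then show ?thesis by blast
    qed
  qed
  obtain cs where "length cs \<ge> 3 \<and> distinct cs \<and> set cs \<subseteq> B \<and>
      (\<forall>i < length cs. adj E (cs ! i) (cs ! ((i + 1) mod length cs)))"
    using cycle_exists[OF fB neB nb] by blast
  then have "has_cycle V E" using BV unfolding has_cycle_def by blast
  then show False using assms(1) by (simp add: tree_def)
qed

end
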